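(* Let $\alpha\in(1/2,1/\sqrt2)$ and $B\coloneqq\overline{R_\varepsilon\setminus\big(R_0\cap[H_+^\delta\cup H_-^\delta]\big)}$. For any two distinct finite words $w\ne w'$ in $\{1,2\}^*$ and any $t\in\mathbb{R}$, $F_w^t(B)\cap F_{w'}^t(B)=\emptyset$.
   Context: Constants: $\varepsilon=\frac1{4\alpha}-\frac1{2\sqrt2}$, $\delta=\frac14-\frac{\alpha}{2\sqrt2}$. Let $\eta\in C_c^\infty(\mathbb{R})$ be nonnegative with support in $(0,1)$ and $\int_0^1\eta=\delta$. $\mathcal{R}(x_1,x_2)=(-x_2,x_1)$. For $t\in\mathbb{R}$, $F_1^t(x)=\big(1-\int_0^t\eta,0\big)+\alpha\mathcal{R}x$, $F_2^t(x)=\big(-1+\int_0^t\eta,0\big)+\alpha\mathcal{R}x$, and for $w\in\{1,2\}^k$, $F_w^t=F_{w_1}^t\circ\cdots\circ F_{w_k}^t$, $F_\emptyset^t=\mathrm{Id}$; $\{1,2\}^*=\bigcup_{k\ge0}\{1,2\}^k$. $R_\xi=[-2-\xi,2+\xi]\times[-\sqrt2-\xi,\sqrt2+\xi]$; $H_\pm^\xi=\{x:\pm x_1\ge\xi\}$. *)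

theory Defs
  imports "HOL-Analysis.Analysis"
begin

type_synonym pt = "real \<times> real"

definition eps_c :: "real \<Rightarrow> real" where
  "eps_c \<alpha> = 1 / (4 * \<alpha>) - 1 / (2 * sqrt 2)"

definition delta_c :: "real \<Rightarrow> real" where
  "delta_c \<alpha> = 1/4 - \<alpha> / (2 * sqrt 2)"

definition smooth_fun :: "(real \<Rightarrow> real) \<Rightarrow> bool" where
  "smooth_fun f \<longleftrightarrow> (\<exists>D :: nat \<Rightarrow> real \<Rightarrow> real. D 0 = f \<and>
      (\<forall>n x. (D n has_real_derivative D (Suc n) x) (at x)))"

definition fsupport :: "(real \<Rightarrow> real) \<Rightarrow> real set" where
  "fsupport f = closure {x. f x \<noteq> 0}"

definition int0 :: "(real \<Rightarrow> real) \<Rightarrow> real \<Rightarrow> real" where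
  "int0 \<eta> t = (if 0 \<le> t then integral {0..t} \<eta> else - integral {t..0} \<eta>)"

definition rot :: "pt \<Rightarrow> pt" where
  "rot x = (- snd x, fst x)"

definition Fmap :: "real \<Rightarrow> (real \<Rightarrow> real) \<Rightarrow> real \<Rightarrow> nat \<Rightarrow> pt \<Rightarrow> pt" where
  "Fmap \<alpha> \<eta> t i x =
     (if i = 1 then (1 - int0 \<eta> t, 0) else (-1 + int0 \<eta> t, 0)) + \<alpha> *\<^sub>R rot x"

definition Fword :: "real \<Rightarrow> (real \<Rightarrow> real) \<Rightarrow> real \<Rightarrow> nat list \<Rightarrow> pt \<Rightarrow> pt" where
  "Fword \<alpha> \<eta> t w = foldr (\<lambda>i g. Fmap \<alpha> \<eta> t i \<circ> g) w id"

definition Rect :: "real \<Rightarrow> pt set" where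
  "Rect \<xi> = {-2-\<xi>..2+\<xi>} \<times> {-sqrt 2-\<xi>..sqrt 2+\<xi>}"

definition Hplus :: "real \<Rightarrow> pt set" where
  "Hplus \<xi> = {x. fst x \<ge> \<xi>}"

definition Hminus :: "real \<Rightarrow> pt set" where
  "Hminus \<xi> = {x. - fst x \<ge> \<xi>}"

definition Bset :: "real \<Rightarrow> pt set" where
  "Bset \<alpha> = closure (Rect (eps_c \<alpha>) - (Rect 0 \<inter> (Hplus (delta_c \<alpha>) \<union> Hminus (delta_c \<alpha>))))"

end

theory Submission
  imports Defs
begin

lemma geo:
  fixes r a d e s x1 x2 :: real
  assumes r: "0<r" "r*r=2" and a: "0<a" "a*r<1" and d: "d = 1/4 - a*r/4" and e: "a*e = d"
    and s: "0\<le>s" "s\<le>d" and x: "\<bar>x1\<bar> \<le> 2+e" "\<bar>x2\<bar> \<le> r+e"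
  shows "d < 1 - s - a*x2" "1 - s - a*x2 < 2" "\<bar>a*x1\<bar> < r"
        "-2 < -1 + s - a*x2" "-1 + s - a*x2 < -d"
proof -
  have h1: "\<bar>a*x2\<bar> \<le> a*r + d" using mult_left_mono[OF x(2), of a] a e
    by (simp add: abs_mult algebra_simps)
  have h2: "\<bar>a*x1\<bar> \<le> 2*a + d" using mult_left_mono[OF x(1), of a] a e
    by (simp add: abs_mult algebra_simps)
  have h3: "2*a = (a*r)*r" using r by (simp add: algebra_simps)
  have "r > 1/4" proof (rule ccontr)
    assume "\<not> r > 1/4" hence "r*r \<le> 1/4*(1/4)" using r by (intro mult_mono) auto
    thus False using r by simp
  qed
  have h4: "(1 - a*r)*r > (1 - a*r)*(1/4)"
    using a r \<open>r > 1/4\<close> by (intro mult_strict_left_mono) auto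
  show "d < 1 - s - a*x2" "1 - s - a*x2 < 2" "-2 < -1 + s - a*x2" "-1 + s - a*x2 < -d"
    using h1 s d a by (auto simp: abs_le_iff)
  have e1: "(1 - a*r)*r = r - 2*a" using h3 by (simp add: algebra_simps)
  have e2: "(1 - a*r)*(1/4) = d" using d by simp
  have "2*a + d < r" using h4 unfolding e1 e2 by linarith
  then show "\<bar>a*x1\<bar> < r" using h2 by linarith
qed

lemma int0_bounds:
  assumes sm: "smooth_fun \<eta>" and nn: "\<forall>x. 0 \<le> \<eta> x" and sup: "fsupport \<eta> \<subseteq> {0<..<1}"
    and I: "integral {0..1} \<eta> = d"
  shows "0 \<le> int0 \<eta> t \<and> int0 \<eta> t \<le> d"
proof -
  have z: "\<eta> x = 0" if "x \<le> 0 \<or> 1 \<le> x" for x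
  proof (rule ccontr)
    assume "\<eta> x \<noteq> 0"
    hence "x \<in> fsupport \<eta>" using closure_subset[of "{x. \<eta> x \<noteq> 0}"] unfolding fsupport_def by blast
    hence "x \<in> {0<..<1}" by (rule subsetD[OF sup])
    thus False using that by auto
  qed
  from sm obtain D where D: "D 0 = \<eta>" "\<And>n x. (D n has_real_derivative D (Suc n) x) (at x)"
    unfolding smooth_fun_def by blast
  have "isCont \<eta> x" for x using D(2)[of 0 x] unfolding D(1) by (rule DERIV_isCont)
  hence ct: "continuous_on S \<eta>" for S by (intro continuous_at_imp_continuous_on) auto
  have intg: "\<eta> integrable_on {a..b}" for a b by (rule integrable_continuous_real[OF ct])
  show ?thesis
  proof (cases "0 \<le> t")
    case False
    have "integral {t..0} \<eta> = integral {t..0} (\<lambda>_. 0::real)"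
      by (rule integral_cong) (use z in auto)
    moreover have "0 \<le> integral {0..1} \<eta>" using nn by (intro Henstock_Kurzweil_Integration.integral_nonneg intg) auto
    ultimately show ?thesis using False I unfolding int0_def by simp
  next
    case True
    let ?m = "max t 1"
    have "integral {0..t} \<eta> + integral {t..?m} \<eta> = integral {0..?m} \<eta>"
      using True by (rule Henstock_Kurzweil_Integration.integral_combine[OF _ _ intg]) auto
    moreover have "integral {0..1} \<eta> + integral {1..?m} \<eta> = integral {0..?m} \<eta>"
      by (rule Henstock_Kurzweil_Integration.integral_combine[OF _ _ intg]) auto
    moreover have "integral {1..?m} \<eta> = integral {1..?m} (\<lambda>_. 0::real)"
      by (rule integral_cong) (use z in auto)
    moreover have "0 \<le> integral {t..?m} \<eta>"
      using nn by (intro Henstock_Kurzweil_Integration.integral_nonneg intg) auto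
    moreover have "0 \<le> integral {0..t} \<eta>"
      using nn by (intro Henstock_Kurzweil_Integration.integral_nonneg intg) auto
    ultimately show ?thesis using True I unfolding int0_def by simp
  qed
qed

definition hole :: "real \<Rightarrow> real \<Rightarrow> nat \<Rightarrow> pt set" where
  "hole d r i = {x. (if i = 1 then d < fst x \<and> fst x < 2 else -2 < fst x \<and> fst x < -d)
      \<and> -r < snd x \<and> snd x < r}"

lemma open_hole: "open (hole d r i)"
proof (cases "i = 1")
  case True
  have "hole d r i = {x. d < fst x} \<inter> {x. fst x < 2} \<inter> {x. -r < snd x} \<inter> {x. snd x < r}"
    using True by (auto simp: hole_def)
  thus ?thesis by (auto intro!: open_Int open_Collect_less continuous_intros)
next
  case False
  have "hole d r i = {x. -2 < fst x} \<inter> {x. fst x < -d} \<inter> {x. -r < snd x} \<inter> {x. snd x < r}"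
    using False by (auto simp: hole_def)
  thus ?thesis by (auto intro!: open_Int open_Collect_less continuous_intros)
qed

lemma hole_disj: "0 < d \<Longrightarrow> hole d r 1 \<inter> hole d r 2 = {}"
  by (auto simp: hole_def)

lemma hole_Rect: "0 < d \<Longrightarrow> 0 \<le> e \<Longrightarrow> r = sqrt 2 \<Longrightarrow> hole d r i \<subseteq> Rect e"
  by (auto simp: hole_def Rect_def split: if_splits)

lemma hole_B:
  assumes "0 < d" "r = sqrt 2" "i \<in> {1,2}"
  shows "hole d r i \<inter> closure (Rect e - (Rect 0 \<inter> (Hplus d \<union> Hminus d))) = {}"
proof -
  have "hole d r i \<inter> (Rect e - (Rect 0 \<inter> (Hplus d \<union> Hminus d))) = {}"
    using assms by (auto simp: hole_def Rect_def Hplus_def Hminus_def split: if_splits)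
  thus ?thesis using open_Int_closure_eq_empty[OF open_hole] by blast
qed

lemma Fword_Cons: "Fword a h t (i # w) = Fmap a h t i \<circ> Fword a h t w"
  by (simp add: Fword_def)

lemma Fword_Nil: "Fword a h t [] = id"
  by (simp add: Fword_def)

lemma inj_Fmap: "a \<noteq> 0 \<Longrightarrow> inj (Fmap a h t i)"
  by (rule injI) (auto simp: Fmap_def rot_def prod_eq_iff)


theorem lemma2p8:
  fixes \<alpha> t :: real and \<eta> :: "real \<Rightarrow> real" and w w' :: "nat list"
  assumes "1/2 < \<alpha>" "\<alpha> < 1 / sqrt 2"
    and "smooth_fun \<eta>" "\<forall>x. 0 \<le> \<eta> x" "fsupport \<eta> \<subseteq> {0<..<1}"
    and "integral {0..1} \<eta> = delta_c \<alpha>"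
    and "set w \<subseteq> {1, 2}" "set w' \<subseteq> {1, 2}" "w \<noteq> w'"
  shows "Fword \<alpha> \<eta> t w ` Bset \<alpha> \<inter> Fword \<alpha> \<eta> t w' ` Bset \<alpha> = {}"
proof -
  define r where "r = sqrt 2"
  define d where "d = delta_c \<alpha>"
  define e where "e = eps_c \<alpha>"
  define s where "s = int0 \<eta> t"
  define B where "B = Bset \<alpha>"
  define F where "F = Fmap \<alpha> \<eta> t"
  define W where "W = Fword \<alpha> \<eta> t"
  have r: "0 < r" "r*r = 2" unfolding r_def by auto
  have a0: "0 < \<alpha>" using assms(1) by linarith
  have ar: "\<alpha>*r < 1" using assms(2) r unfolding r_def by (simp add: field_simps)
  have q: "\<alpha>/(2*r) = \<alpha>*r/4"
  proof -
    have "\<alpha>*r/4 = \<alpha>*r/(2*(r*r))" using r by simp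
    also have "\<dots> = \<alpha>/(2*r)" using r by (simp add: field_simps)
    finally show ?thesis by simp
  qed
  have dd: "d = 1/4 - \<alpha>*r/4" unfolding d_def delta_c_def r_def[symmetric] q by simp
  have ae: "\<alpha>*e = d" unfolding e_def eps_c_def dd r_def[symmetric] using a0 q
    by (simp add: field_simps)
  have d0: "0 < d" using dd ar by simp
  have e0: "0 \<le> e" using zero_less_mult_pos[of \<alpha> e] ae d0 a0 by simp
  have sb: "0 \<le> s" "s \<le> d" using int0_bounds[OF assms(3,4,5,6)] unfolding s_def d_def by auto
  have Fh: "F i x \<in> hole d r i" if "i \<in> {1,2}" "x \<in> Rect e" for i x
  proof -
    have x: "\<bar>fst x\<bar> \<le> 2+e" "\<bar>snd x\<bar> \<le> r+e" using that(2)
      unfolding Rect_def r_def by (auto simp: mem_Times_iff abs_le_iff)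
    note g = geo[OF r a0 ar dd ae sb x]
    show ?thesis using that(1) g unfolding F_def Fmap_def hole_def rot_def s_def
      by (auto simp: abs_less_iff)
  qed
  have BR: "B \<subseteq> Rect e" unfolding B_def Bset_def e_def[symmetric]
    by (rule closure_minimal) (auto simp: Rect_def intro!: closed_Times)
  have HB: "hole d r i \<inter> B = {}" if "i \<in> {1,2}" for i
    unfolding B_def Bset_def d_def[symmetric] e_def[symmetric]
    using hole_B[OF d0 r_def that] .
  have HR: "hole d r i \<subseteq> Rect e" for i using hole_Rect[OF d0 e0 r_def] .
  have WC: "W (i # v) = F i \<circ> W v" for i v unfolding W_def F_def by (rule Fword_Cons)
  have WN: "W [] = id" unfolding W_def by (rule Fword_Nil)
  have A: "W v ` B \<subseteq> Rect e" if "set v \<subseteq> {1,2}" for v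
    using that
  proof (induction v)
    case Nil thus ?case using BR by (simp add: WN)
  next
    case (Cons i v)
    hence "W v ` B \<subseteq> Rect e" "i \<in> {1,2}" by auto
    hence "F i ` (W v ` B) \<subseteq> hole d r i" using Fh by blast
    moreover have "W (i#v) ` B = F i ` (W v ` B)" unfolding WC by (simp add: image_comp)
    ultimately show ?case using HR by blast
  qed
  have A2: "W (i#v) ` B \<subseteq> hole d r i" if "set (i#v) \<subseteq> {1,2}" for i v
  proof -
    have "W v ` B \<subseteq> Rect e" "i \<in> {1,2}" using A that by auto
    hence "F i ` (W v ` B) \<subseteq> hole d r i" using Fh by blast
    moreover have "W (i#v) ` B = F i ` (W v ` B)" unfolding WC by (simp add: image_comp)
    ultimately show ?thesis by simp
  qed
  have injF: "inj (F i)" for i unfolding F_def using a0 by (intro inj_Fmap) simp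
  have main: "W u ` B \<inter> W u' ` B = {}" if "set u \<subseteq> {1,2}" "set u' \<subseteq> {1,2}" "u \<noteq> u'" for u u'
    using that
  proof (induction u arbitrary: u')
    case Nil
    then obtain j v where u': "u' = j # v" by (cases u') auto
    have "j \<in> {1,2}" using Nil u' by auto
    thus ?case using A2[of j v] Nil u' HB[of j] by (auto simp: WN)
  next
    case (Cons i v)
    show ?case
    proof (cases u')
      case Nil
      have "i \<in> {1,2}" using Cons by auto
      thus ?thesis using A2[of i v] Cons Nil HB[of i] by (auto simp: WN)
    next
      fix j v' assume Cons2: "u' = j # v'"
      show ?thesis
      proof (cases "i = j")
        case True
        hence "v \<noteq> v'" using Cons.prems Cons2 by auto
        hence "W v ` B \<inter> W v' ` B = {}" using Cons.IH Cons.prems Cons2 by auto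
        hence "F i ` (W v ` B) \<inter> F i ` (W v' ` B) = {}"
          using injF[of i] by (simp add: image_Int[symmetric])
        thus ?thesis unfolding Cons2 WC True by (simp add: image_comp)
      next
        case False
        have "i \<in> {1,2}" "j \<in> {1,2}" using Cons.prems Cons2 by auto
        hence "hole d r i \<inter> hole d r j = {}" using False hole_disj[OF d0, of r] by auto
        thus ?thesis using A2[of i v] A2[of j v'] Cons.prems Cons2 by blast
      qed
    qed
  qed
  show ?thesis using main[OF assms(7,8,9)] unfolding W_def B_def .
qed

end
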